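(* Let $\mathcal{C}$ be a category. Natural weak factorisation systems on $\mathcal{C}$ are in bijection with bialgebras in the strict 2-fold monoidal category $(\mathbf{Ff}_{\mathcal{C}},\otimes,I,\odot,\bot)$ described below.
   Context: $\mathcal{C}^{\mathbf 2}$ is the arrow category (objects: morphisms $f\colon X\to Y$; morphisms $(h,k)\colon f\to g$: commuting squares $gh=kf$). A functorial factorisation $(E,\lambda,\rho)$ is a functor $E\colon\mathcal{C}^{\mathbf 2}\to\mathcal{C}$ with natural $\lambda\colon\mathrm{dom}\Rightarrow E$, $\rho\colon E\Rightarrow\mathrm{cod}$, $\rho_f\lambda_f=f$. $\mathbf{Ff}_{\mathcal{C}}$ has these as objects and as morphisms natural $\alpha\colon E\Rightarrow E'$ with $\alpha\lambda=\lambda'$, $\rho'\alpha=\rho$. Monoidal structures: $(E',\lambda',\rho')\otimes(E,\lambda,\rho)$ factorises $f$ as $X\xrightarrow{\lambda'_{\rho_f}\lambda_f}E'(\rho_f)\xrightarrow{\rho'_{\rho_f}}Y$, unit $I=(\mathrm{dom},1,\kappa)$ (initial); $(E',\lambda',\rho')\odot(E,\lambda,\rho)$ factorises $f$ as $X\xrightarrow{\lambda'_{\lambda_f}}E'(\lambda_f)\xrightarrow{\rho_f\rho'_{\lambda_f}}Y$, unit $\bot=(\mathrm{cod},\kappa,1)$ (terminal); on morphisms $(\beta\otimes\alpha)_f=\beta_{\nu_f}E'(\alpha_f,1_Y)$, $(\beta\odot\alpha)_f=\beta_{\mu_f}E'(1_X,\alpha_f)$ for $\alpha\colon(E,\lambda,\rho)\to(F,\mu,\nu)$,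 $\beta\colon(E',\ldots)\to(F',\mu',\nu')$. The 2-fold structure: $m,c,j$ are the unique maps (from the initial / to the terminal object), and for $A=(E^1,\lambda^1,\rho^1)$, $B=(E^2,\ldots)$, $C=(E^3,\ldots)$, $D=(E^4,\ldots)$ the component at $f\colon X\to Y$ of $z_{A,B,C,D}\colon(A\odot B)\otimes(C\odot D)\to(A\otimes C)\odot(B\otimes D)$ is $E^1\big(E^3(1_X,\lambda^2_{\rho^4_f}),\,E^2(\rho^3_{\lambda^4_f},1_Y)\big)$. A bialgebra is $(A,\eta,\mu,\epsilon,\Delta)$ with $(A,\eta,\mu)$ a $\otimes$-monoid, $(A,\epsilon,\Delta)$ a $\odot$-comonoid, such that $\Delta\eta=(\eta\odot\eta)c$, $\epsilon\mu=m(\epsilon\otimes\epsilon)$, $\epsilon\eta=j$ and $\Delta\mu=(\mu\odot\mu)\,z_{A,A,A,A}\,(\Delta\otimes\Delta)$. A natural weak factorisation system (n.w.f.s.) on $\mathcal{C}$ is a functorial factorisation $(E,\lambda,\rho)$ together with natural families $\sigma_f\colon Ef\to E(\lambda_f)$ and $\pi_f\colon E(\rho_f)\to Ef$ (natural in $f$, where $L,R\colon\mathcal{C}^{\mathbf 2}\to\mathcal{C}^{\mathbf 2}$ send $f$ to $\lambda_f$, $\rho_f$) satisfying $\sigma_f\lambda_f=\lambda_{\lambda_f}$, $\rho_f\pi_f=\rho_{\rho_f}$, $\rho_{\lambda_f}\sigma_f=1$, $\pi_f\lambda_{\rho_f}=1$, $E(1_X,\rho_f)\sigma_f=1$, $\pi_fE(\lambda_f,1_Y)=1$,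 $E(1_X,\sigma_f)\sigma_f=\sigma_{\lambda_f}\sigma_f$, $\pi_fE(\pi_f,1_Y)=\pi_f\pi_{\rho_f}$, and $\sigma_f\pi_f=\pi_{\lambda_f}E(\sigma_f,\pi_f)\sigma_{\rho_f}$ (equivalently: a comonad $\mathsf L$ on $\mathcal{C}^{\mathbf 2}$ over $\mathrm{dom}$ with underlying functor $L$, a monad $\mathsf R$ over $\mathrm{cod}$ with underlying functor $R$, and a distributive law $LR\Rightarrow RL$). *)

theory Defs
  imports "HOL-Library.FuncSet"
begin

record ('o, 'a) cat =
  Ob    :: "'o set"
  Ar    :: "'a set"
  cdom  :: "'a \<Rightarrow> 'o"
  ccod  :: "'a \<Rightarrow> 'o"
  cid   :: "'o \<Rightarrow> 'a"
  ccomp :: "'a \<Rightarrow> 'a \<Rightarrow> 'a"   (* ccomp C g f = g o f *)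

definition hom :: "('o, 'a) cat \<Rightarrow> 'o \<Rightarrow> 'o \<Rightarrow> 'a set" where
  "hom C x y = {f \<in> Ar C. cdom C f = x \<and> ccod C f = y}"

definition category :: "('o, 'a) cat \<Rightarrow> bool" where
  "category C \<longleftrightarrow>
     (\<forall>f\<in>Ar C. cdom C f \<in> Ob C \<and> ccod C f \<in> Ob C) \<and>
     (\<forall>x\<in>Ob C. cid C x \<in> hom C x x) \<and>
     (\<forall>f\<in>Ar C. \<forall>g\<in>Ar C. ccod C f = cdom C g \<longrightarrow>
         ccomp C g f \<in> hom C (cdom C f) (ccod C g)) \<and>
     (\<forall>f\<in>Ar C. ccomp C (cid C (ccod C f)) f = f \<and> ccomp C f (cid C (cdom C f)) = f) \<and>
     (\<forall>f\<in>Ar C. \<forall>g\<in>Ar C. \<forall>h\<in>Ar C. ccod C f = cdom C g \<longrightarrow> ccod C g = cdom C h \<longrightarrow>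
         ccomp C h (ccomp C g f) = ccomp C (ccomp C h g) f)"

definition is_sq :: "('o, 'a) cat \<Rightarrow> 'a \<Rightarrow> 'a \<Rightarrow> 'a \<Rightarrow> 'a \<Rightarrow> bool" where
  "is_sq C f g h k \<longleftrightarrow> f \<in> Ar C \<and> g \<in> Ar C \<and>
     h \<in> hom C (cdom C f) (cdom C g) \<and> k \<in> hom C (ccod C f) (ccod C g) \<and>
     ccomp C g h = ccomp C k f"

text \<open>fobj = E on objects of the arrow category, fmap f g h k = E(h,k) : Ef \<rightarrow> Eg
  for a square (h,k) : f \<rightarrow> g, flam = \<lambda>, frho = \<rho>.\<close>

record ('o, 'a) ffact =
  fobj :: "'a \<Rightarrow> 'o"
  fmap :: "'a \<Rightarrow> 'a \<Rightarrow> 'a \<Rightarrow> 'a \<Rightarrow> 'a"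
  flam :: "'a \<Rightarrow> 'a"
  frho :: "'a \<Rightarrow> 'a"

definition functorial_factorisation :: "('o, 'a) cat \<Rightarrow> ('o, 'a) ffact \<Rightarrow> bool" where
  "functorial_factorisation C F \<longleftrightarrow>
     (\<forall>f\<in>Ar C. fobj F f \<in> Ob C \<and>
        flam F f \<in> hom C (cdom C f) (fobj F f) \<and>
        frho F f \<in> hom C (fobj F f) (ccod C f) \<and>
        ccomp C (frho F f) (flam F f) = f \<and>
        fmap F f f (cid C (cdom C f)) (cid C (ccod C f)) = cid C (fobj F f)) \<and>
     (\<forall>f g h k. is_sq C f g h k \<longrightarrow>
        fmap F f g h k \<in> hom C (fobj F f) (fobj F g) \<and>
        ccomp C (fmap F f g h k) (flam F f) = ccomp C (flam F g) h \<and>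
        ccomp C k (frho F f) = ccomp C (frho F g) (fmap F f g h k)) \<and>
     (\<forall>f g g' h k h' k'. is_sq C f g h k \<longrightarrow> is_sq C g g' h' k' \<longrightarrow>
        fmap F f g' (ccomp C h' h) (ccomp C k' k) = ccomp C (fmap F g g' h' k') (fmap F f g h k))"

definition ff_mor :: "('o, 'a) cat \<Rightarrow> ('o, 'a) ffact \<Rightarrow> ('o, 'a) ffact \<Rightarrow> ('a \<Rightarrow> 'a) \<Rightarrow> bool" where
  "ff_mor C F G \<alpha> \<longleftrightarrow>
     (\<forall>f\<in>Ar C. \<alpha> f \<in> hom C (fobj F f) (fobj G f) \<and>
        ccomp C (\<alpha> f) (flam F f) = flam G f \<and>
        ccomp C (frho G f) (\<alpha> f) = frho F f) \<and>
     (\<forall>f g h k. is_sq C f g h k \<longrightarrow>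
        ccomp C (\<alpha> g) (fmap F f g h k) = ccomp C (fmap G f g h k) (\<alpha> f))"

definition meq :: "('o, 'a) cat \<Rightarrow> ('a \<Rightarrow> 'a) \<Rightarrow> ('a \<Rightarrow> 'a) \<Rightarrow> bool" where
  "meq C \<alpha> \<beta> \<longleftrightarrow> (\<forall>f\<in>Ar C. \<alpha> f = \<beta> f)"

definition vcomp :: "('o, 'a) cat \<Rightarrow> ('a \<Rightarrow> 'a) \<Rightarrow> ('a \<Rightarrow> 'a) \<Rightarrow> ('a \<Rightarrow> 'a)" where
  "vcomp C \<beta> \<alpha> = (\<lambda>f. ccomp C (\<beta> f) (\<alpha> f))"

definition idm :: "('o, 'a) cat \<Rightarrow> ('o, 'a) ffact \<Rightarrow> ('a \<Rightarrow> 'a)" where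
  "idm C F = (\<lambda>f. cid C (fobj F f))"

text \<open>otimes C F' F = F' \<otimes> F; odot C F' F = F' \<odot> F.\<close>

definition otimes :: "('o, 'a) cat \<Rightarrow> ('o, 'a) ffact \<Rightarrow> ('o, 'a) ffact \<Rightarrow> ('o, 'a) ffact" where
  "otimes C F' F =
     \<lparr> fobj = (\<lambda>f. fobj F' (frho F f)),
       fmap = (\<lambda>f g h k. fmap F' (frho F f) (frho F g) (fmap F f g h k) k),
       flam = (\<lambda>f. ccomp C (flam F' (frho F f)) (flam F f)),
       frho = (\<lambda>f. frho F' (frho F f)) \<rparr>"

definition odot :: "('o, 'a) cat \<Rightarrow> ('o, 'a) ffact \<Rightarrow> ('o, 'a) ffact \<Rightarrow> ('o, 'a) ffact" where
  "odot C F' F =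
     \<lparr> fobj = (\<lambda>f. fobj F' (flam F f)),
       fmap = (\<lambda>f g h k. fmap F' (flam F f) (flam F g) h (fmap F f g h k)),
       flam = (\<lambda>f. flam F' (flam F f)),
       frho = (\<lambda>f. ccomp C (frho F f) (frho F' (flam F f))) \<rparr>"

definition Iunit :: "('o, 'a) cat \<Rightarrow> ('o, 'a) ffact" where
  "Iunit C = \<lparr> fobj = cdom C, fmap = (\<lambda>f g h k. h), flam = (\<lambda>f. cid C (cdom C f)), frho = (\<lambda>f. f) \<rparr>"

definition Bunit :: "('o, 'a) cat \<Rightarrow> ('o, 'a) ffact" where
  "Bunit C = \<lparr> fobj = ccod C, fmap = (\<lambda>f g h k. k), flam = (\<lambda>f. f), frho = (\<lambda>f. cid C (ccod C f)) \<rparr>"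

definition otimes_mor :: "('o, 'a) cat \<Rightarrow> ('o, 'a) ffact \<Rightarrow> ('o, 'a) ffact \<Rightarrow> ('o, 'a) ffact
    \<Rightarrow> ('a \<Rightarrow> 'a) \<Rightarrow> ('a \<Rightarrow> 'a) \<Rightarrow> ('a \<Rightarrow> 'a)" where
  "otimes_mor C Fb F G \<beta> \<alpha> =
     (\<lambda>f. ccomp C (\<beta> (frho G f)) (fmap Fb (frho F f) (frho G f) (\<alpha> f) (cid C (ccod C f))))"

definition odot_mor :: "('o, 'a) cat \<Rightarrow> ('o, 'a) ffact \<Rightarrow> ('o, 'a) ffact \<Rightarrow> ('o, 'a) ffact
    \<Rightarrow> ('a \<Rightarrow> 'a) \<Rightarrow> ('a \<Rightarrow> 'a) \<Rightarrow> ('a \<Rightarrow> 'a)" where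
  "odot_mor C Fb F G \<beta> \<alpha> =
     (\<lambda>f. ccomp C (\<beta> (flam G f)) (fmap Fb (flam F f) (flam G f) (cid C (cdom C f)) (\<alpha> f)))"

text \<open>The unique maps m : \<bottom>\<otimes>\<bottom> \<rightarrow> \<bottom>, c : I \<rightarrow> I\<odot>I, j : I \<rightarrow> \<bottom> (their components are
  forced: identities resp. f itself).\<close>

definition m_map :: "('o, 'a) cat \<Rightarrow> ('a \<Rightarrow> 'a)" where
  "m_map C = (\<lambda>f. cid C (ccod C f))"

definition c_map :: "('o, 'a) cat \<Rightarrow> ('a \<Rightarrow> 'a)" where
  "c_map C = (\<lambda>f. cid C (cdom C f))"

definition j_map :: "('o, 'a) cat \<Rightarrow> ('a \<Rightarrow> 'a)" where
  "j_map C = (\<lambda>f. f)"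

text \<open>Interchange z_{A,B,C,D} : (A\<odot>B)\<otimes>(C\<odot>D) \<rightarrow> (A\<otimes>C)\<odot>(B\<otimes>D), with component
  E^1(E^3(1_X, \<lambda>^2_{\<rho>^4_f}), E^2(\<rho>^3_{\<lambda>^4_f}, 1_Y)).\<close>

definition z_map :: "('o, 'a) cat \<Rightarrow> ('o, 'a) ffact \<Rightarrow> ('o, 'a) ffact \<Rightarrow> ('o, 'a) ffact
    \<Rightarrow> ('o, 'a) ffact \<Rightarrow> ('a \<Rightarrow> 'a)" where
  "z_map C A B CC D =
     (\<lambda>f. let g = frho (odot C CC D) f;
              h = flam (otimes C B D) f
          in fmap A (flam B g) (frho CC h)
               (fmap CC (flam D f) h (cid C (cdom C f)) (flam B (frho D f)))
               (fmap B g (frho D f) (frho CC (flam D f)) (cid C (ccod C f))))"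

definition bialgebra :: "('o, 'a) cat \<Rightarrow> ('o, 'a) ffact \<Rightarrow>
    ('a \<Rightarrow> 'a) \<Rightarrow> ('a \<Rightarrow> 'a) \<Rightarrow> ('a \<Rightarrow> 'a) \<Rightarrow> ('a \<Rightarrow> 'a) \<Rightarrow> bool" where
  "bialgebra C A \<eta> \<mu> \<epsilon> \<Delta> \<longleftrightarrow>
     functorial_factorisation C A \<and>
     \<comment> \<open>(A, \<eta>, \<mu>) is a \<otimes>-monoid\<close>
     ff_mor C (Iunit C) A \<eta> \<and>
     ff_mor C (otimes C A A) A \<mu> \<and>
     meq C (vcomp C \<mu> (otimes_mor C (otimes C A A) A A \<mu> (idm C A)))
           (vcomp C \<mu> (otimes_mor C A (otimes C A A) A (idm C A) \<mu>)) \<and>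
     meq C (vcomp C \<mu> (otimes_mor C (Iunit C) A A \<eta> (idm C A))) (idm C A) \<and>
     meq C (vcomp C \<mu> (otimes_mor C A (Iunit C) A (idm C A) \<eta>)) (idm C A) \<and>
     \<comment> \<open>(A, \<epsilon>, \<Delta>) is a \<odot>-comonoid\<close>
     ff_mor C A (Bunit C) \<epsilon> \<and>
     ff_mor C A (odot C A A) \<Delta> \<and>
     meq C (vcomp C (odot_mor C A A (odot C A A) (idm C A) \<Delta>) \<Delta>)
           (vcomp C (odot_mor C A A A \<Delta> (idm C A)) \<Delta>) \<and>
     meq C (vcomp C (odot_mor C A A A \<epsilon> (idm C A)) \<Delta>) (idm C A) \<and>
     meq C (vcomp C (odot_mor C A A (Bunit C) (idm C A) \<epsilon>) \<Delta>) (idm C A) \<and>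
     \<comment> \<open>compatibility\<close>
     meq C (vcomp C \<Delta> \<eta>) (vcomp C (odot_mor C (Iunit C) (Iunit C) A \<eta> \<eta>) (c_map C)) \<and>
     meq C (vcomp C \<epsilon> \<mu>) (vcomp C (m_map C) (otimes_mor C A A (Bunit C) \<epsilon> \<epsilon>)) \<and>
     meq C (vcomp C \<epsilon> \<eta>) (j_map C) \<and>
     meq C (vcomp C \<Delta> \<mu>)
           (vcomp C (odot_mor C (otimes C A A) (otimes C A A) A \<mu> \<mu>)
              (vcomp C (z_map C A A A A) (otimes_mor C A A (odot C A A) \<Delta> \<Delta>)))"

definition nwfs :: "('o, 'a) cat \<Rightarrow> ('o, 'a) ffact \<Rightarrow> ('a \<Rightarrow> 'a) \<Rightarrow> ('a \<Rightarrow> 'a) \<Rightarrow> bool" where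
  "nwfs C F \<sigma> \<pi> \<longleftrightarrow>
     functorial_factorisation C F \<and>
     (\<forall>f\<in>Ar C.
        let E = fobj F; Em = fmap F; lm = flam F; rh = frho F; cmp = ccomp C;
            X = cdom C f; Y = ccod C f in
        \<sigma> f \<in> hom C (E f) (E (lm f)) \<and>
        \<pi> f \<in> hom C (E (rh f)) (E f) \<and>
        cmp (\<sigma> f) (lm f) = lm (lm f) \<and>
        cmp (rh f) (\<pi> f) = rh (rh f) \<and>
        cmp (rh (lm f)) (\<sigma> f) = cid C (E f) \<and>
        cmp (\<pi> f) (lm (rh f)) = cid C (E f) \<and>
        cmp (Em (lm f) f (cid C X) (rh f)) (\<sigma> f) = cid C (E f) \<and>
        cmp (\<pi> f) (Em f (rh f) (lm f) (cid C Y)) = cid C (E f) \<and>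
        cmp (Em (lm f) (lm (lm f)) (cid C X) (\<sigma> f)) (\<sigma> f) = cmp (\<sigma> (lm f)) (\<sigma> f) \<and>
        cmp (\<pi> f) (Em (rh (rh f)) (rh f) (\<pi> f) (cid C Y)) = cmp (\<pi> f) (\<pi> (rh f)) \<and>
        cmp (\<sigma> f) (\<pi> f) =
          cmp (\<pi> (lm f)) (cmp (Em (lm (rh f)) (rh (lm f)) (\<sigma> f) (\<pi> f)) (\<sigma> (rh f)))) \<and>
     \<comment> \<open>naturality of \<sigma> : E \<Rightarrow> E L and \<pi> : E R \<Rightarrow> E, with L(h,k) = (h, E(h,k)), R(h,k) = (E(h,k), k)\<close>
     (\<forall>f g h k. is_sq C f g h k \<longrightarrow>
        ccomp C (\<sigma> g) (fmap F f g h k) =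
          ccomp C (fmap F (flam F f) (flam F g) h (fmap F f g h k)) (\<sigma> f) \<and>
        ccomp C (\<pi> g) (fmap F (frho F f) (frho F g) (fmap F f g h k) k) =
          ccomp C (fmap F f g h k) (\<pi> f))"

text \<open>Families of arrows are taken extensional (undefined off the arrows of C), so that
  each structure has a unique representative.\<close>

definition nwfs_structs :: "('o, 'a) cat \<Rightarrow> ('o, 'a) ffact \<Rightarrow> (('a \<Rightarrow> 'a) \<times> ('a \<Rightarrow> 'a)) set" where
  "nwfs_structs C F = {(\<sigma>, \<pi>). \<sigma> \<in> extensional (Ar C) \<and> \<pi> \<in> extensional (Ar C) \<and> nwfs C F \<sigma> \<pi>}"

definition bialg_structs :: "('o, 'a) cat \<Rightarrow> ('o, 'a) ffact \<Rightarrow>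
    (('a \<Rightarrow> 'a) \<times> ('a \<Rightarrow> 'a) \<times> ('a \<Rightarrow> 'a) \<times> ('a \<Rightarrow> 'a)) set" where
  "bialg_structs C A = {(\<eta>, \<mu>, \<epsilon>, \<Delta>).
     \<eta> \<in> extensional (Ar C) \<and> \<mu> \<in> extensional (Ar C) \<and>
     \<epsilon> \<in> extensional (Ar C) \<and> \<Delta> \<in> extensional (Ar C) \<and> bialgebra C A \<eta> \<mu> \<epsilon> \<Delta>}"

end

theory Submission
  imports Defs
begin


locale FF =
  fixes C :: "('o, 'a) cat" and F :: "('o, 'a) ffact"
  assumes cat: "category C" and ff: "functorial_factorisation C F"
begin

abbreviation "cc \<equiv> ccomp C"
abbreviation "E \<equiv> fobj F"
abbreviation "Em \<equiv> fmap F"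
abbreviation "lm \<equiv> flam F"
abbreviation "rh \<equiv> frho F"

lemma dom_Ob[simp]: "f \<in> Ar C \<Longrightarrow> cdom C f \<in> Ob C"
  using cat unfolding category_def by blast
lemma cod_Ob[simp]: "f \<in> Ar C \<Longrightarrow> ccod C f \<in> Ob C"
  using cat unfolding category_def by blast
lemma id_Ar[simp]: "x \<in> Ob C \<Longrightarrow> cid C x \<in> Ar C"
  using cat unfolding category_def hom_def by blast
lemma id_dom[simp]: "x \<in> Ob C \<Longrightarrow> cdom C (cid C x) = x"
  using cat unfolding category_def hom_def by blast
lemma id_cod[simp]: "x \<in> Ob C \<Longrightarrow> ccod C (cid C x) = x"
  using cat unfolding category_def hom_def by blast
lemma comp_Ar[simp]: "f \<in> Ar C \<Longrightarrow> g \<in> Ar C \<Longrightarrow> ccod C f = cdom C g \<Longrightarrow> cc g f \<in> Ar C"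
  using cat unfolding category_def hom_def by blast
lemma comp_dom[simp]: "f \<in> Ar C \<Longrightarrow> g \<in> Ar C \<Longrightarrow> ccod C f = cdom C g \<Longrightarrow> cdom C (cc g f) = cdom C f"
  using cat unfolding category_def hom_def by blast
lemma comp_cod[simp]: "f \<in> Ar C \<Longrightarrow> g \<in> Ar C \<Longrightarrow> ccod C f = cdom C g \<Longrightarrow> ccod C (cc g f) = ccod C g"
  using cat unfolding category_def hom_def by blast
lemma idl[simp]: "f \<in> Ar C \<Longrightarrow> ccod C f = y \<Longrightarrow> cc (cid C y) f = f"
  using cat unfolding category_def by blast
lemma idr[simp]: "f \<in> Ar C \<Longrightarrow> cdom C f = x \<Longrightarrow> cc f (cid C x) = f"
  using cat unfolding category_def by blast
lemma assoc: "f \<in> Ar C \<Longrightarrow> g \<in> Ar C \<Longrightarrow> h \<in> Ar C \<Longrightarrow> ccod C f = cdom C g \<Longrightarrow> ccod C g = cdom C h \<Longrightarrow>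
   cc h (cc g f) = cc (cc h g) f"
  using cat unfolding category_def by blast

lemma hom_iff: "f \<in> hom C x y \<longleftrightarrow> f \<in> Ar C \<and> cdom C f = x \<and> ccod C f = y"
  unfolding hom_def by simp

lemma sq_iff: "is_sq C f g h k \<longleftrightarrow> f \<in> Ar C \<and> g \<in> Ar C \<and> h \<in> Ar C \<and> k \<in> Ar C \<and>
   cdom C h = cdom C f \<and> ccod C h = cdom C g \<and> cdom C k = ccod C f \<and> ccod C k = ccod C g \<and>
   cc g h = cc k f"
  unfolding is_sq_def hom_def by auto

lemma E_Ob[simp]: "f \<in> Ar C \<Longrightarrow> E f \<in> Ob C"
  using ff unfolding functorial_factorisation_def by blast
lemma lm_Ar[simp]: "f \<in> Ar C \<Longrightarrow> lm f \<in> Ar C"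
  using ff unfolding functorial_factorisation_def hom_def by blast
lemma lm_dom[simp]: "f \<in> Ar C \<Longrightarrow> cdom C (lm f) = cdom C f"
  using ff unfolding functorial_factorisation_def hom_def by blast
lemma lm_cod[simp]: "f \<in> Ar C \<Longrightarrow> ccod C (lm f) = E f"
  using ff unfolding functorial_factorisation_def hom_def by blast
lemma rh_Ar[simp]: "f \<in> Ar C \<Longrightarrow> rh f \<in> Ar C"
  using ff unfolding functorial_factorisation_def hom_def by blast
lemma rh_dom[simp]: "f \<in> Ar C \<Longrightarrow> cdom C (rh f) = E f"
  using ff unfolding functorial_factorisation_def hom_def by blast
lemma rh_cod[simp]: "f \<in> Ar C \<Longrightarrow> ccod C (rh f) = ccod C f"
  using ff unfolding functorial_factorisation_def hom_def by blast
lemma rh_lm[simp]: "f \<in> Ar C \<Longrightarrow> cc (rh f) (lm f) = f"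
  using ff unfolding functorial_factorisation_def hom_def by blast
lemma Em_id[simp]: "f \<in> Ar C \<Longrightarrow> Em f f (cid C (cdom C f)) (cid C (ccod C f)) = cid C (E f)"
  using ff unfolding functorial_factorisation_def hom_def by blast
lemma Em_id': "f \<in> Ar C \<Longrightarrow> x = cdom C f \<Longrightarrow> y = ccod C f \<Longrightarrow> Em f f (cid C x) (cid C y) = cid C (E f)"
  by simp
lemma Em_Ar: "is_sq C f g h k \<Longrightarrow> Em f g h k \<in> Ar C"
  using ff unfolding functorial_factorisation_def hom_def by blast
lemma Em_dom: "is_sq C f g h k \<Longrightarrow> cdom C (Em f g h k) = E f"
  using ff unfolding functorial_factorisation_def hom_def by blast
lemma Em_cod: "is_sq C f g h k \<Longrightarrow> ccod C (Em f g h k) = E g"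
  using ff unfolding functorial_factorisation_def hom_def by blast
lemma lm_nat: "is_sq C f g h k \<Longrightarrow> cc (Em f g h k) (lm f) = cc (lm g) h"
  using ff unfolding functorial_factorisation_def hom_def by blast
lemma rh_nat: "is_sq C f g h k \<Longrightarrow> cc k (rh f) = cc (rh g) (Em f g h k)"
  using ff unfolding functorial_factorisation_def hom_def by blast
lemma Em_comp: "is_sq C f g h k \<Longrightarrow> is_sq C g g' h' k' \<Longrightarrow>
   Em f g' (cc h' h) (cc k' k) = cc (Em g g' h' k') (Em f g h k)"
  using ff unfolding functorial_factorisation_def by blast

end

context FF begin

lemma dist_expand:
  shows "vcomp C (odot_mor C (otimes C F F) (otimes C F F) F \<mu> \<mu>)
              (vcomp C (z_map C F F F F) (otimes_mor C F F (odot C F F) \<Delta> \<Delta>)) f =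
    (let X = cdom C f; Y = ccod C f; g = cc (rh f) (rh (lm f)); h = cc (lm (rh f)) (lm f) in
     cc (cc (\<mu> (lm f)) (Em (rh h) (rh (lm f)) (Em h (lm f) (cid C X) (\<mu> f)) (\<mu> f)))
        (cc (Em (lm g) (rh h) (Em (lm f) h (cid C X) (lm (rh f))) (Em g (rh f) (rh (lm f)) (cid C Y)))
            (cc (\<Delta> g) (Em (rh f) g (\<Delta> f) (cid C Y)))))"
  by (simp add: vcomp_def odot_mor_def otimes_mor_def z_map_def otimes_def odot_def Let_def)
end

context FF begin

lemma dist_main:
  assumes f: "f \<in> Ar C"
    and ty: "\<forall>x\<in>Ar C. \<sigma> x \<in> hom C (E x) (E (lm x)) \<and> \<pi> x \<in> hom C (E (rh x)) (E x)"
    and s1: "cc (rh (lm f)) (\<sigma> f) = cid C (E f)"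
    and p1: "cc (\<pi> f) (lm (rh f)) = cid C (E f)"
    and nat: "cc (\<sigma> (cc (rh f) (rh (lm f)))) (Em (rh f) (cc (rh f) (rh (lm f))) (\<sigma> f) (cid C (ccod C f)))
       = cc (Em (lm (rh f)) (lm (cc (rh f) (rh (lm f)))) (\<sigma> f) (Em (rh f) (cc (rh f) (rh (lm f))) (\<sigma> f) (cid C (ccod C f)))) (\<sigma> (rh f))"
  shows "(let X = cdom C f; Y = ccod C f; g = cc (rh f) (rh (lm f)); h = cc (lm (rh f)) (lm f) in
     cc (cc (\<pi> (lm f)) (Em (rh h) (rh (lm f)) (Em h (lm f) (cid C X) (\<pi> f)) (\<pi> f)))
        (cc (Em (lm g) (rh h) (Em (lm f) h (cid C X) (lm (rh f))) (Em g (rh f) (rh (lm f)) (cid C Y)))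
            (cc (\<sigma> g) (Em (rh f) g (\<sigma> f) (cid C Y)))))
   = cc (\<pi> (lm f)) (cc (Em (lm (rh f)) (rh (lm f)) (\<sigma> f) (\<pi> f)) (\<sigma> (rh f)))"
proof -
  define X where "X = cdom C f"
  define Y where "Y = ccod C f"
  define g where "g = cc (rh f) (rh (lm f))"
  define h where "h = cc (lm (rh f)) (lm f)"
  have tyI: "\<And>x. x \<in> Ar C \<Longrightarrow> \<sigma> x \<in> Ar C \<and> cdom C (\<sigma> x) = E x \<and> ccod C (\<sigma> x) = E (lm x) \<and>
      \<pi> x \<in> Ar C \<and> cdom C (\<pi> x) = E (rh x) \<and> ccod C (\<pi> x) = E x"
    using ty unfolding hom_iff by blast
  have X[simp]: "X \<in> Ob C" "Y \<in> Ob C" using f X_def Y_def by auto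
  have g[simp]: "g \<in> Ar C" "cdom C g = E (lm f)" "ccod C g = Y"
    using f unfolding g_def Y_def by auto
  have h[simp]: "h \<in> Ar C" "cdom C h = X" "ccod C h = E (rh f)"
    using f unfolding h_def X_def by auto
  have sf[simp]: "\<sigma> f \<in> Ar C" "cdom C (\<sigma> f) = E f" "ccod C (\<sigma> f) = E (lm f)"
    "\<pi> f \<in> Ar C" "cdom C (\<pi> f) = E (rh f)" "ccod C (\<pi> f) = E f"
    using tyI[OF f] by auto
  have pl[simp]: "\<pi> (lm f) \<in> Ar C" "cdom C (\<pi> (lm f)) = E (rh (lm f))"
    using tyI[of "lm f"] f by auto
  have sg[simp]: "\<sigma> g \<in> Ar C" "cdom C (\<sigma> g) = E g" "ccod C (\<sigma> g) = E (lm g)"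
    using tyI[of g] by auto
  have sr[simp]: "\<sigma> (rh f) \<in> Ar C" "cdom C (\<sigma> (rh f)) = E (rh f)" "ccod C (\<sigma> (rh f)) = E (lm (rh f))"
    using tyI[of "rh f"] f by auto
  have q1: "is_sq C (lm f) h (cid C X) (lm (rh f))"
    unfolding sq_iff using f by (simp add: X_def h_def)
  have q2: "is_sq C h (lm f) (cid C X) (\<pi> f)"
  proof -
    have "cc (\<pi> f) h = lm f"
      unfolding h_def using f by (subst assoc) (auto simp: p1)
    then show ?thesis unfolding sq_iff using f by (simp add: X_def)
  qed
  have q3: "is_sq C g (rh f) (rh (lm f)) (cid C Y)"
    unfolding sq_iff using f by (simp add: Y_def g_def)
  have q4: "is_sq C (rh f) g (\<sigma> f) (cid C Y)"
  proof -
    have "cc g (\<sigma> f) = rh f"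
      unfolding g_def using f by (subst assoc[symmetric]) (auto simp: s1)
    then show ?thesis unfolding sq_iff using f by (simp add: Y_def)
  qed
  define a where "a = Em (lm f) h (cid C X) (lm (rh f))"
  define b where "b = Em g (rh f) (rh (lm f)) (cid C Y)"
  define e2 where "e2 = Em h (lm f) (cid C X) (\<pi> f)"
  define d where "d = Em (rh f) g (\<sigma> f) (cid C Y)"
  have a[simp]: "a \<in> Ar C" "cdom C a = E (lm f)" "ccod C a = E h"
    unfolding a_def using Em_Ar[OF q1] Em_dom[OF q1] Em_cod[OF q1] by auto
  have b[simp]: "b \<in> Ar C" "cdom C b = E g" "ccod C b = E (rh f)"
    unfolding b_def using Em_Ar[OF q3] Em_dom[OF q3] Em_cod[OF q3] by auto
  have e2[simp]: "e2 \<in> Ar C" "cdom C e2 = E h" "ccod C e2 = E (lm f)"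
    unfolding e2_def using Em_Ar[OF q2] Em_dom[OF q2] Em_cod[OF q2] by auto
  have d[simp]: "d \<in> Ar C" "cdom C d = E (rh f)" "ccod C d = E g"
    unfolding d_def using Em_Ar[OF q4] Em_dom[OF q4] Em_cod[OF q4] by auto
  have q5: "is_sq C (lm g) (rh h) a b"
  proof -
    have "cc (rh h) a = cc b (lm g)"
      using rh_nat[OF q1] lm_nat[OF q3] unfolding a_def b_def by simp
    then show ?thesis unfolding sq_iff using f by simp
  qed
  have q6: "is_sq C (rh h) (rh (lm f)) e2 (\<pi> f)"
  proof -
    have "cc (rh (lm f)) e2 = cc (\<pi> f) (rh h)"
      using rh_nat[OF q2] unfolding e2_def by simp
    then show ?thesis unfolding sq_iff using f by simp
  qed
  define c1 where "c1 = cc (\<pi> f) b"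
  have c1[simp]: "c1 \<in> Ar C" "cdom C c1 = E g" "ccod C c1 = E f"
    unfolding c1_def by auto
  have e2a: "cc e2 a = cid C (E (lm f))"
  proof -
    have "cc e2 a = Em (lm f) (lm f) (cc (cid C X) (cid C X)) (cc (\<pi> f) (lm (rh f)))"
      unfolding e2_def a_def by (rule Em_comp[OF q1 q2, symmetric])
    also have "\<dots> = cid C (E (lm f))" using f by (simp add: p1 X_def Em_id')
    finally show ?thesis .
  qed
  define QZ where "QZ = Em (lm g) (rh (lm f)) (cid C (E (lm f))) c1"
  have QZ: "cc (Em (rh h) (rh (lm f)) e2 (\<pi> f)) (Em (lm g) (rh h) a b) = QZ"
    unfolding QZ_def c1_def using Em_comp[OF q5 q6, symmetric] e2a by simp
  have q7: "is_sq C (lm (rh f)) (lm g) (\<sigma> f) d"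
  proof -
    have "cc (lm g) (\<sigma> f) = cc d (lm (rh f))"
      using lm_nat[OF q4] unfolding d_def by simp
    then show ?thesis unfolding sq_iff using f by simp
  qed
  have bl: "cc b (lm g) = cc (lm (rh f)) (rh (lm f))"
    using lm_nat[OF q3] unfolding b_def by simp
  have q8: "is_sq C (lm g) (rh (lm f)) (cid C (E (lm f))) c1"
  proof -
    have "cc c1 (lm g) = cc (\<pi> f) (cc b (lm g))"
      unfolding c1_def by (rule assoc[symmetric]) auto
    also have "\<dots> = cc (cc (\<pi> f) (lm (rh f))) (rh (lm f))"
      unfolding bl using f by (rule_tac assoc) auto
    also have "\<dots> = rh (lm f)" using f by (simp add: p1)
    finally have "cc (rh (lm f)) (cid C (E (lm f))) = cc c1 (lm g)" using f by simp
    then show ?thesis unfolding sq_iff using f by simp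
  qed
  have bd: "cc b d = cid C (E (rh f))"
  proof -
    have "cc b d = Em (rh f) (rh f) (cc (rh (lm f)) (\<sigma> f)) (cc (cid C Y) (cid C Y))"
      unfolding b_def d_def by (rule Em_comp[OF q4 q3, symmetric])
    also have "\<dots> = cid C (E (rh f))" using f by (simp add: s1 Y_def Em_id')
    finally show ?thesis .
  qed
  have c1d: "cc c1 d = \<pi> f"
  proof -
    have "cc c1 d = cc (\<pi> f) (cc b d)" unfolding c1_def by (rule assoc[symmetric]) auto
    then show ?thesis using bd by simp
  qed
  define m7 where "m7 = Em (lm (rh f)) (lm g) (\<sigma> f) d"
  have m7[simp]: "m7 \<in> Ar C" "cdom C m7 = E (lm (rh f))" "ccod C m7 = E (lm g)"
    unfolding m7_def using Em_Ar[OF q7] Em_dom[OF q7] Em_cod[OF q7] by auto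
  have QZm: "cc QZ m7 = Em (lm (rh f)) (rh (lm f)) (\<sigma> f) (\<pi> f)"
  proof -
    have "cc QZ m7 = Em (lm (rh f)) (rh (lm f)) (cc (cid C (E (lm f))) (\<sigma> f)) (cc c1 d)"
      unfolding QZ_def m7_def by (rule Em_comp[OF q7 q8, symmetric])
    then show ?thesis using c1d by simp
  qed
  have natd: "cc (\<sigma> g) d = cc m7 (\<sigma> (rh f))"
    using nat unfolding g_def[symmetric] Y_def[symmetric] d_def m7_def .
  define Q where "Q = Em (rh h) (rh (lm f)) e2 (\<pi> f)"
  define Z where "Z = Em (lm g) (rh h) a b"
  have Q[simp]: "Q \<in> Ar C" "cdom C Q = E (rh h)" "ccod C Q = E (rh (lm f))"
    unfolding Q_def using Em_Ar[OF q6] Em_dom[OF q6] Em_cod[OF q6] by auto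
  have Z[simp]: "Z \<in> Ar C" "cdom C Z = E (lm g)" "ccod C Z = E (rh h)"
    unfolding Z_def using Em_Ar[OF q5] Em_dom[OF q5] Em_cod[OF q5] by auto
  have QZ_[simp]: "QZ \<in> Ar C" "cdom C QZ = E (lm g)" "ccod C QZ = E (rh (lm f))"
    using QZ[folded Q_def Z_def, symmetric] by auto
  have "cc (cc (\<pi> (lm f)) Q) (cc Z (cc (\<sigma> g) d)) = cc (\<pi> (lm f)) (cc Q (cc Z (cc (\<sigma> g) d)))"
    by (rule assoc[symmetric]) auto
  also have "cc Q (cc Z (cc (\<sigma> g) d)) = cc (cc Q Z) (cc (\<sigma> g) d)"
    by (rule assoc) auto
  also have "\<dots> = cc QZ (cc m7 (\<sigma> (rh f)))"
    using QZ natd unfolding Q_def Z_def by simp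
  also have "\<dots> = cc (cc QZ m7) (\<sigma> (rh f))"
    by (rule assoc) auto
  finally have main: "cc (cc (\<pi> (lm f)) Q) (cc Z (cc (\<sigma> g) d)) =
      cc (\<pi> (lm f)) (cc (Em (lm (rh f)) (rh (lm f)) (\<sigma> f) (\<pi> f)) (\<sigma> (rh f)))"
    unfolding QZm .
  show ?thesis
    using main unfolding Let_def Q_def Z_def e2_def a_def b_def d_def
      X_def[symmetric] Y_def[symmetric] g_def[symmetric] h_def[symmetric] .
qed
end


locale FFB = FF C F for C :: "('o, 'a) cat" and F +
  fixes \<eta> \<mu> \<epsilon> \<Delta> :: "'a \<Rightarrow> 'a"
  assumes base: "\<forall>x\<in>Ar C. \<eta> x = lm x \<and> \<epsilon> x = rh x \<and>
      \<Delta> x \<in> Ar C \<and> cdom C (\<Delta> x) = E x \<and> ccod C (\<Delta> x) = E (lm x) \<and>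
      \<mu> x \<in> Ar C \<and> cdom C (\<mu> x) = E (rh x) \<and> ccod C (\<mu> x) = E x \<and>
      cc (\<Delta> x) (lm x) = lm (lm x) \<and> cc (rh x) (\<mu> x) = rh (rh x) \<and>
      cc (rh (lm x)) (\<Delta> x) = cid C (E x) \<and> cc (\<mu> x) (lm (rh x)) = cid C (E x)"
   and bnat: "\<forall>f g h k. is_sq C f g h k \<longrightarrow>
        cc (\<Delta> g) (Em f g h k) = cc (Em (lm f) (lm g) h (Em f g h k)) (\<Delta> f) \<and>
        cc (\<mu> g) (Em (rh f) (rh g) (Em f g h k) k) = cc (Em f g h k) (\<mu> f)"
begin

lemma eta_eq[simp]: "x \<in> Ar C \<Longrightarrow> \<eta> x = lm x" using base by blast
lemma eps_eq[simp]: "x \<in> Ar C \<Longrightarrow> \<epsilon> x = rh x" using base by blast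
lemma D_Ar[simp]: "x \<in> Ar C \<Longrightarrow> \<Delta> x \<in> Ar C" using base by blast
lemma D_dom[simp]: "x \<in> Ar C \<Longrightarrow> cdom C (\<Delta> x) = E x" using base by blast
lemma D_cod[simp]: "x \<in> Ar C \<Longrightarrow> ccod C (\<Delta> x) = E (lm x)" using base by blast
lemma M_Ar[simp]: "x \<in> Ar C \<Longrightarrow> \<mu> x \<in> Ar C" using base by blast
lemma M_dom[simp]: "x \<in> Ar C \<Longrightarrow> cdom C (\<mu> x) = E (rh x)" using base by blast
lemma M_cod[simp]: "x \<in> Ar C \<Longrightarrow> ccod C (\<mu> x) = E x" using base by blast
lemma D_lm[simp]: "x \<in> Ar C \<Longrightarrow> cc (\<Delta> x) (lm x) = lm (lm x)" using base by blast
lemma rh_M[simp]: "x \<in> Ar C \<Longrightarrow> cc (rh x) (\<mu> x) = rh (rh x)" using base by blast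
lemma rlD[simp]: "x \<in> Ar C \<Longrightarrow> cc (rh (lm x)) (\<Delta> x) = cid C (E x)" using base by blast
lemma Mlr[simp]: "x \<in> Ar C \<Longrightarrow> cc (\<mu> x) (lm (rh x)) = cid C (E x)" using base by blast
lemma D_nat: "is_sq C f g h k \<Longrightarrow> cc (\<Delta> g) (Em f g h k) = cc (Em (lm f) (lm g) h (Em f g h k)) (\<Delta> f)"
  using bnat by blast
lemma M_nat: "is_sq C f g h k \<Longrightarrow> cc (\<mu> g) (Em (rh f) (rh g) (Em f g h k) k) = cc (Em f g h k) (\<mu> f)"
  using bnat by blast

lemma sq_Ar: "is_sq C f g h k \<Longrightarrow> f \<in> Ar C \<and> g \<in> Ar C" unfolding sq_iff by blast

lemma C_eta: "ff_mor C (Iunit C) F \<eta>"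
  unfolding ff_mor_def Iunit_def
  apply (auto simp: hom_iff)
  subgoal for f g h k using sq_Ar[of f g h k] lm_nat[of f g h k] by simp
  done

lemma C_eps: "ff_mor C F (Bunit C) \<epsilon>"
  unfolding ff_mor_def Bunit_def
  apply (auto simp: hom_iff)
  subgoal for f g h k using sq_Ar[of f g h k] rh_nat[of f g h k] by simp
  done

lemma C_mu: "ff_mor C (otimes C F F) F \<mu>"
  unfolding ff_mor_def otimes_def
  apply (auto simp: hom_iff)
  subgoal for f by (subst assoc) auto
  subgoal for f g h k using M_nat[of f g h k] by simp
  done

lemma C_Delta: "ff_mor C F (odot C F F) \<Delta>"
  unfolding ff_mor_def odot_def
  apply (auto simp: hom_iff)
  subgoal for f by (subst assoc[symmetric]) auto
  subgoal for f g h k using D_nat[of f g h k] by simp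
  done

lemma sqA: "f \<in> Ar C \<Longrightarrow> is_sq C (rh (rh f)) (rh f) (\<mu> f) (cid C (ccod C f))"
  unfolding sq_iff by simp
lemma sqB: "f \<in> Ar C \<Longrightarrow> is_sq C f (rh f) (lm f) (cid C (ccod C f))"
  unfolding sq_iff by simp
lemma sqC: "f \<in> Ar C \<Longrightarrow> is_sq C (lm f) (lm (lm f)) (cid C (cdom C f)) (\<Delta> f)"
  unfolding sq_iff by simp
lemma sqD: "f \<in> Ar C \<Longrightarrow> is_sq C (lm f) f (cid C (cdom C f)) (rh f)"
  unfolding sq_iff by simp

lemma C_assoc: "meq C (vcomp C \<mu> (otimes_mor C (otimes C F F) F F \<mu> (idm C F)))
           (vcomp C \<mu> (otimes_mor C F (otimes C F F) F (idm C F) \<mu>)) \<longleftrightarrow>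
   (\<forall>f\<in>Ar C. cc (\<mu> f) (Em (rh (rh f)) (rh f) (\<mu> f) (cid C (ccod C f))) = cc (\<mu> f) (\<mu> (rh f)))"
proof -
  have "vcomp C \<mu> (otimes_mor C (otimes C F F) F F \<mu> (idm C F)) f = cc (\<mu> f) (\<mu> (rh f))"
    if f: "f \<in> Ar C" for f
    using f by (simp add: vcomp_def otimes_mor_def otimes_def idm_def Em_id')
  moreover have "vcomp C \<mu> (otimes_mor C F (otimes C F F) F (idm C F) \<mu>) f =
      cc (\<mu> f) (Em (rh (rh f)) (rh f) (\<mu> f) (cid C (ccod C f)))"
    if f: "f \<in> Ar C" for f
    using f Em_Ar[OF sqA[OF f]] Em_cod[OF sqA[OF f]]
    by (simp add: vcomp_def otimes_mor_def otimes_def idm_def)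
  ultimately show ?thesis unfolding meq_def by auto
qed

lemma C_unitl: "meq C (vcomp C \<mu> (otimes_mor C (Iunit C) F F \<eta> (idm C F))) (idm C F)"
  unfolding meq_def by (simp add: vcomp_def otimes_mor_def Iunit_def idm_def)

lemma C_unitr: "meq C (vcomp C \<mu> (otimes_mor C F (Iunit C) F (idm C F) \<eta>)) (idm C F) \<longleftrightarrow>
   (\<forall>f\<in>Ar C. cc (\<mu> f) (Em f (rh f) (lm f) (cid C (ccod C f))) = cid C (E f))"
proof -
  have "vcomp C \<mu> (otimes_mor C F (Iunit C) F (idm C F) \<eta>) f = cc (\<mu> f) (Em f (rh f) (lm f) (cid C (ccod C f)))"
    if f: "f \<in> Ar C" for f
    using f Em_Ar[OF sqB[OF f]] Em_cod[OF sqB[OF f]]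
    by (simp add: vcomp_def otimes_mor_def Iunit_def idm_def)
  then show ?thesis unfolding meq_def by (auto simp: idm_def)
qed

lemma C_coassoc: "meq C (vcomp C (odot_mor C F F (odot C F F) (idm C F) \<Delta>) \<Delta>)
           (vcomp C (odot_mor C F F F \<Delta> (idm C F)) \<Delta>) \<longleftrightarrow>
   (\<forall>f\<in>Ar C. cc (Em (lm f) (lm (lm f)) (cid C (cdom C f)) (\<Delta> f)) (\<Delta> f) = cc (\<Delta> (lm f)) (\<Delta> f))"
proof -
  have "vcomp C (odot_mor C F F (odot C F F) (idm C F) \<Delta>) \<Delta> f =
      cc (Em (lm f) (lm (lm f)) (cid C (cdom C f)) (\<Delta> f)) (\<Delta> f)"
    if f: "f \<in> Ar C" for f
    using f Em_Ar[OF sqC[OF f]] Em_cod[OF sqC[OF f]]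
    by (simp add: vcomp_def odot_mor_def odot_def idm_def)
  moreover have "vcomp C (odot_mor C F F F \<Delta> (idm C F)) \<Delta> f = cc (\<Delta> (lm f)) (\<Delta> f)"
    if f: "f \<in> Ar C" for f
    using f by (simp add: vcomp_def odot_mor_def idm_def Em_id')
  ultimately show ?thesis unfolding meq_def by auto
qed

lemma C_counitl: "meq C (vcomp C (odot_mor C F F F \<epsilon> (idm C F)) \<Delta>) (idm C F)"
  unfolding meq_def by (simp add: vcomp_def odot_mor_def idm_def Em_id')

lemma C_counitr: "meq C (vcomp C (odot_mor C F F (Bunit C) (idm C F) \<epsilon>) \<Delta>) (idm C F) \<longleftrightarrow>
   (\<forall>f\<in>Ar C. cc (Em (lm f) f (cid C (cdom C f)) (rh f)) (\<Delta> f) = cid C (E f))"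
proof -
  have "vcomp C (odot_mor C F F (Bunit C) (idm C F) \<epsilon>) \<Delta> f =
      cc (Em (lm f) f (cid C (cdom C f)) (rh f)) (\<Delta> f)"
    if f: "f \<in> Ar C" for f
    using f Em_Ar[OF sqD[OF f]] Em_cod[OF sqD[OF f]]
    by (simp add: vcomp_def odot_mor_def Bunit_def idm_def)
  then show ?thesis unfolding meq_def by (auto simp: idm_def)
qed

lemma C_Deta: "meq C (vcomp C \<Delta> \<eta>) (vcomp C (odot_mor C (Iunit C) (Iunit C) F \<eta> \<eta>) (c_map C))"
  unfolding meq_def by (simp add: vcomp_def odot_mor_def Iunit_def c_map_def)

lemma C_emu: "meq C (vcomp C \<epsilon> \<mu>) (vcomp C (m_map C) (otimes_mor C F F (Bunit C) \<epsilon> \<epsilon>))"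
  unfolding meq_def
proof
  fix f assume f: "f \<in> Ar C"
  have s: "is_sq C (rh f) (cid C (ccod C f)) (rh f) (cid C (ccod C f))"
    unfolding sq_iff using f by simp
  have "cc (rh (cid C (ccod C f))) (Em (rh f) (cid C (ccod C f)) (rh f) (cid C (ccod C f))) = rh (rh f)"
    using rh_nat[OF s, symmetric] f by simp
  then show "vcomp C \<epsilon> \<mu> f = vcomp C (m_map C) (otimes_mor C F F (Bunit C) \<epsilon> \<epsilon>) f"
    using f Em_Ar[OF s] Em_dom[OF s] Em_cod[OF s]
    by (simp add: vcomp_def otimes_mor_def Bunit_def m_map_def)
qed

lemma C_eeta: "meq C (vcomp C \<epsilon> \<eta>) (j_map C)"
  unfolding meq_def by (simp add: vcomp_def j_map_def)

lemma C_dist: "meq C (vcomp C \<Delta> \<mu>)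
           (vcomp C (odot_mor C (otimes C F F) (otimes C F F) F \<mu> \<mu>)
              (vcomp C (z_map C F F F F) (otimes_mor C F F (odot C F F) \<Delta> \<Delta>))) \<longleftrightarrow>
   (\<forall>f\<in>Ar C. cc (\<Delta> f) (\<mu> f) =
      cc (\<mu> (lm f)) (cc (Em (lm (rh f)) (rh (lm f)) (\<Delta> f) (\<mu> f)) (\<Delta> (rh f))))"
proof -
  have "vcomp C (odot_mor C (otimes C F F) (otimes C F F) F \<mu> \<mu>)
              (vcomp C (z_map C F F F F) (otimes_mor C F F (odot C F F) \<Delta> \<Delta>)) f =
        cc (\<mu> (lm f)) (cc (Em (lm (rh f)) (rh (lm f)) (\<Delta> f) (\<mu> f)) (\<Delta> (rh f)))"
    if f: "f \<in> Ar C" for f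
    unfolding dist_expand
  proof (rule dist_main[OF f])
    show "\<forall>x\<in>Ar C. \<Delta> x \<in> hom C (E x) (E (lm x)) \<and> \<mu> x \<in> hom C (E (rh x)) (E x)"
      by (simp add: hom_iff)
    show "cc (rh (lm f)) (\<Delta> f) = cid C (E f)" using f by simp
    show "cc (\<mu> f) (lm (rh f)) = cid C (E f)" using f by simp
    have s: "is_sq C (rh f) (cc (rh f) (rh (lm f))) (\<Delta> f) (cid C (ccod C f))"
    proof -
      have "cc (cc (rh f) (rh (lm f))) (\<Delta> f) = rh f"
        using f by (subst assoc[symmetric]) auto
      then show ?thesis unfolding sq_iff using f by simp
    qed
    show "cc (\<Delta> (cc (rh f) (rh (lm f)))) (Em (rh f) (cc (rh f) (rh (lm f))) (\<Delta> f) (cid C (ccod C f))) =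
      cc (Em (lm (rh f)) (lm (cc (rh f) (rh (lm f)))) (\<Delta> f)
          (Em (rh f) (cc (rh f) (rh (lm f))) (\<Delta> f) (cid C (ccod C f)))) (\<Delta> (rh f))"
      by (rule D_nat[OF s])
  qed
  then show ?thesis unfolding meq_def by (auto simp: vcomp_def)
qed

end


context FFB begin
lemma equiv: "bialgebra C F \<eta> \<mu> \<epsilon> \<Delta> \<longleftrightarrow> nwfs C F \<Delta> \<mu>"
  unfolding bialgebra_def nwfs_def Let_def
  using ff C_eta C_mu C_eps C_Delta C_unitl C_counitl C_Deta C_emu C_eeta bnat
  by (simp add: C_assoc C_unitr C_coassoc C_counitr C_dist hom_iff) (auto simp: eq_commute)
end

context FF begin

lemma bialg_base:
  assumes b: "bialgebra C F \<eta> \<mu> \<epsilon> \<Delta>"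
  shows "FFB C F \<eta> \<mu> \<epsilon> \<Delta>"
proof -
  have eta: "ff_mor C (Iunit C) F \<eta>" and mu: "ff_mor C (otimes C F F) F \<mu>"
    and eps: "ff_mor C F (Bunit C) \<epsilon>" and De: "ff_mor C F (odot C F F) \<Delta>"
    and ul: "meq C (vcomp C \<mu> (otimes_mor C (Iunit C) F F \<eta> (idm C F))) (idm C F)"
    and cul: "meq C (vcomp C (odot_mor C F F F \<epsilon> (idm C F)) \<Delta>) (idm C F)"
    using b unfolding bialgebra_def by auto
  have etaq: "\<eta> x = lm x" if x: "x \<in> Ar C" for x
    using eta x unfolding ff_mor_def Iunit_def hom_iff by auto
  have epsq: "\<epsilon> x = rh x" if x: "x \<in> Ar C" for x
    using eps x unfolding ff_mor_def Bunit_def hom_iff by auto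
  have M: "\<mu> x \<in> Ar C \<and> cdom C (\<mu> x) = E (rh x) \<and> ccod C (\<mu> x) = E x \<and> cc (rh x) (\<mu> x) = rh (rh x)"
    if x: "x \<in> Ar C" for x
    using mu x unfolding ff_mor_def otimes_def hom_iff by auto
  have D: "\<Delta> x \<in> Ar C \<and> cdom C (\<Delta> x) = E x \<and> ccod C (\<Delta> x) = E (lm x) \<and> cc (\<Delta> x) (lm x) = lm (lm x)"
    if x: "x \<in> Ar C" for x
    using De x unfolding ff_mor_def odot_def hom_iff by auto
  have U: "cc (\<mu> x) (lm (rh x)) = cid C (E x)" if x: "x \<in> Ar C" for x
    using ul x M[OF x] etaq[of "rh x"] unfolding meq_def
    by (auto simp: vcomp_def otimes_mor_def Iunit_def idm_def)
  have CU: "cc (rh (lm x)) (\<Delta> x) = cid C (E x)" if x: "x \<in> Ar C" for x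
    using cul x D[OF x] epsq[of "lm x"] unfolding meq_def
    by (auto simp: vcomp_def odot_mor_def idm_def Em_id')
  show ?thesis
  proof (unfold_locales)
    show "\<forall>x\<in>Ar C. \<eta> x = lm x \<and> \<epsilon> x = rh x \<and>
      \<Delta> x \<in> Ar C \<and> cdom C (\<Delta> x) = E x \<and> ccod C (\<Delta> x) = E (lm x) \<and>
      \<mu> x \<in> Ar C \<and> cdom C (\<mu> x) = E (rh x) \<and> ccod C (\<mu> x) = E x \<and>
      cc (\<Delta> x) (lm x) = lm (lm x) \<and> cc (rh x) (\<mu> x) = rh (rh x) \<and>
      cc (rh (lm x)) (\<Delta> x) = cid C (E x) \<and> cc (\<mu> x) (lm (rh x)) = cid C (E x)"
      using etaq epsq M D U CU by blast
    show "\<forall>f g h k. is_sq C f g h k \<longrightarrow>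
        cc (\<Delta> g) (Em f g h k) = cc (Em (lm f) (lm g) h (Em f g h k)) (\<Delta> f) \<and>
        cc (\<mu> g) (Em (rh f) (rh g) (Em f g h k) k) = cc (Em f g h k) (\<mu> f)"
      using mu De unfolding ff_mor_def otimes_def odot_def by auto
  qed
qed

lemma nwfs_base:
  assumes n: "nwfs C F \<sigma> \<pi>"
  shows "FFB C F (restrict lm (Ar C)) \<pi> (restrict rh (Ar C)) \<sigma>"
proof (unfold_locales)
  show "\<forall>x\<in>Ar C. restrict lm (Ar C) x = lm x \<and> restrict rh (Ar C) x = rh x \<and>
      \<sigma> x \<in> Ar C \<and> cdom C (\<sigma> x) = E x \<and> ccod C (\<sigma> x) = E (lm x) \<and>
      \<pi> x \<in> Ar C \<and> cdom C (\<pi> x) = E (rh x) \<and> ccod C (\<pi> x) = E x \<and>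
      cc (\<sigma> x) (lm x) = lm (lm x) \<and> cc (rh x) (\<pi> x) = rh (rh x) \<and>
      cc (rh (lm x)) (\<sigma> x) = cid C (E x) \<and> cc (\<pi> x) (lm (rh x)) = cid C (E x)"
    using n unfolding nwfs_def Let_def hom_iff by auto
  show "\<forall>f g h k. is_sq C f g h k \<longrightarrow>
        cc (\<sigma> g) (Em f g h k) = cc (Em (lm f) (lm g) h (Em f g h k)) (\<sigma> f) \<and>
        cc (\<pi> g) (Em (rh f) (rh g) (Em f g h k) k) = cc (Em f g h k) (\<pi> f)"
    using n unfolding nwfs_def by auto
qed

end

theorem proposition3p7:
  fixes C :: "('o, 'a) cat" and F :: "('o, 'a) ffact"
  assumes "category C"
    and "functorial_factorisation C F"
  shows "\<exists>\<Phi>. bij_betw \<Phi> (nwfs_structs C F) (bialg_structs C F)"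
proof -
  interpret FF C F using assms by unfold_locales
  define \<Phi> where "\<Phi> = (\<lambda>(\<sigma>::'a\<Rightarrow>'a, \<pi>::'a\<Rightarrow>'a). (restrict lm (Ar C), \<pi>, restrict rh (Ar C), \<sigma>))"
  define \<Psi> where "\<Psi> = (\<lambda>(\<eta>::'a\<Rightarrow>'a, \<mu>::'a\<Rightarrow>'a, \<epsilon>::'a\<Rightarrow>'a, \<Delta>::'a\<Rightarrow>'a). (\<Delta>, \<mu>))"
  have "bij_betw \<Phi> (nwfs_structs C F) (bialg_structs C F)"
  proof (rule bij_betw_byWitness[where f' = \<Psi>])
    show "\<forall>a\<in>nwfs_structs C F. \<Psi> (\<Phi> a) = a"
      unfolding \<Phi>_def \<Psi>_def by auto
    show "\<forall>a\<in>bialg_structs C F. \<Phi> (\<Psi> a) = a"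
    proof
      fix a assume "a \<in> bialg_structs C F"
      then obtain \<eta> \<mu> \<epsilon> \<Delta> where a: "a = (\<eta>, \<mu>, \<epsilon>, \<Delta>)"
        and ext: "\<eta> \<in> extensional (Ar C)" "\<epsilon> \<in> extensional (Ar C)"
        and b: "bialgebra C F \<eta> \<mu> \<epsilon> \<Delta>"
        unfolding bialg_structs_def by auto
      interpret B: FFB C F \<eta> \<mu> \<epsilon> \<Delta> by (rule bialg_base[OF b])
      have "\<eta> = restrict lm (Ar C)"
        using ext(1) by (intro extensionalityI[OF ext(1)]) auto
      moreover have "\<epsilon> = restrict rh (Ar C)"
        using ext(2) by (intro extensionalityI[OF ext(2)]) auto
      ultimately show "\<Phi> (\<Psi> a) = a" unfolding a \<Phi>_def \<Psi>_def by simp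
    qed
    show "\<Phi> ` nwfs_structs C F \<subseteq> bialg_structs C F"
    proof
      fix b assume "b \<in> \<Phi> ` nwfs_structs C F"
      then obtain \<sigma> \<pi> where b: "b = \<Phi> (\<sigma>, \<pi>)" and e: "\<sigma> \<in> extensional (Ar C)" "\<pi> \<in> extensional (Ar C)"
        and n: "nwfs C F \<sigma> \<pi>"
        unfolding nwfs_structs_def by auto
      interpret B: FFB C F "restrict lm (Ar C)" \<pi> "restrict rh (Ar C)" \<sigma> by (rule nwfs_base[OF n])
      show "b \<in> bialg_structs C F"
        unfolding b \<Phi>_def bialg_structs_def using e n B.equiv by auto
    qed
    show "\<Psi> ` bialg_structs C F \<subseteq> nwfs_structs C F"
    proof
      fix b assume "b \<in> \<Psi> ` bialg_structs C F"
      then obtain \<eta> \<mu> \<epsilon> \<Delta> where bb: "b = (\<Delta>, \<mu>)"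
        and ext: "\<mu> \<in> extensional (Ar C)" "\<Delta> \<in> extensional (Ar C)"
        and bi: "bialgebra C F \<eta> \<mu> \<epsilon> \<Delta>"
        unfolding bialg_structs_def \<Psi>_def by auto
      interpret B: FFB C F \<eta> \<mu> \<epsilon> \<Delta> by (rule bialg_base[OF bi])
      show "b \<in> nwfs_structs C F"
        unfolding bb nwfs_structs_def using ext bi B.equiv by auto
    qed
  qed
  then show ?thesis by blast
qed

end
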